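(* For all integers $n\geq 2$ and $m\geq 1$, $\mathrm{mbt}(K_{2n+1}\Box C_{2m+1})=\Delta(K_{2n+1}\Box C_{2m+1})+1=2n+3$.
   Context: A book embedding of a graph $G$ consists of a linear ordering of $V(G)$ (the vertices placed on the spine) together with an assignment of each edge to one of a set of pages such that no two edges on the same page cross, i.e. there are no two edges $uv$, $xy$ on the same page with $u<x<v<y$ in the ordering. A book embedding is matching if on every page each vertex is incident with at most one edge of that page. The matching book thickness $\mathrm{mbt}(G)$ is the minimum number of pages over all matching book embeddings of $G$. $\Delta(G)$ denotes the maximum degree of $G$. $K_r$ is the complete graph on $r$ vertices, $C_s$ the cycle on $s$ vertices. The Cartesian product $G\Box B$ has vertex set $V(G)\times V(B)$, with $(u_1,v_1)$ adjacent to $(u_2,v_2)$ iff either $u_1=u_2$ and $v_1v_2\in E(B)$, or $v_1=v_2$ and $u_1u_2\in E(G)$. *)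

theory Defs
  imports Main
begin

type_synonym 'a graph = "'a set \<times> 'a set set"

definition verts :: "'a graph \<Rightarrow> 'a set" where "verts G = fst G"
definition edges :: "'a graph \<Rightarrow> 'a set set" where "edges G = snd G"

definition complete_graph :: "nat \<Rightarrow> nat graph" where
  "complete_graph r = ({0..<r}, {{i, j} | i j. i < r \<and> j < r \<and> i \<noteq> j})"

text \<open>Cycle C_s on vertices 0..s-1 (meaningful for s >= 3).\<close>
definition cycle_graph :: "nat \<Rightarrow> nat graph" where
  "cycle_graph s = ({0..<s}, {{i, (i + 1) mod s} | i. i < s})"

definition cart_prod :: "'a graph \<Rightarrow> 'b graph \<Rightarrow> ('a \<times> 'b) graph" (infixr "\<box>" 80) where
  "cart_prod G B = (verts G \<times> verts B,
     {{(u, v1), (u, v2)} | u v1 v2. u \<in> verts G \<and> {v1, v2} \<in> edges B}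
     \<union> {{(u1, v), (u2, v)} | u1 u2 v. {u1, u2} \<in> edges G \<and> v \<in> verts B})"

definition degree :: "'a graph \<Rightarrow> 'a \<Rightarrow> nat" where
  "degree G v = card {e \<in> edges G. v \<in> e}"

definition max_degree :: "'a graph \<Rightarrow> nat" where
  "max_degree G = Max (degree G ` verts G)"

definition crossing :: "('a \<Rightarrow> nat) \<Rightarrow> 'a set \<Rightarrow> 'a set \<Rightarrow> bool" where
  "crossing pos e f \<longleftrightarrow> (\<exists>u v x y. e = {u, v} \<and> f = {x, y} \<and>
      pos u < pos x \<and> pos x < pos v \<and> pos v < pos y)"

definition matching_book_embedding ::
    "'a graph \<Rightarrow> nat \<Rightarrow> ('a \<Rightarrow> nat) \<Rightarrow> ('a set \<Rightarrow> nat) \<Rightarrow> bool" where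
  "matching_book_embedding G k pos page \<longleftrightarrow>
     inj_on pos (verts G) \<and>
     (\<forall>e \<in> edges G. page e < k) \<and>
     (\<forall>e \<in> edges G. \<forall>f \<in> edges G. page e = page f \<longrightarrow> \<not> crossing pos e f) \<and>
     (\<forall>e \<in> edges G. \<forall>f \<in> edges G. page e = page f \<longrightarrow> e \<noteq> f \<longrightarrow> e \<inter> f = {})"

definition mbt :: "'a graph \<Rightarrow> nat" where
  "mbt G = (LEAST k. \<exists>pos page. matching_book_embedding G k pos page)"

end

theory Submission
  imports Defs
begin

lemma edges_G:
  fixes n m :: nat
  shows "edges (complete_graph (2*n+1) \<box> cycle_graph (2*m+1)) =
     {{(a,j),(b,j)} | a b j. a < b \<and> b < 2*n+1 \<and> j < 2*m+1}
   \<union> {{(a,j),(a,Suc j mod (2*m+1))} | a j. a < 2*n+1 \<and> j < 2*m+1}"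
proof -
  have E: "edges (complete_graph (2*n+1) \<box> cycle_graph (2*m+1)) =
     {{(u, v1), (u, v2)} |u v1 v2. u \<in> {0..<2*n+1} \<and> {v1, v2} \<in> {{i, (i + 1) mod (2*m+1)} |i. i < 2*m+1}}
     \<union> {{(u1, v), (u2, v)} |u1 u2 v. {u1, u2} \<in> {{i, j} |i j. i < 2*n+1 \<and> j < 2*n+1 \<and> i \<noteq> j} \<and> v \<in> {0..<2*m+1}}"
    unfolding cart_prod_def edges_def verts_def complete_graph_def cycle_graph_def by simp
  show ?thesis unfolding E
  proof (rule equalityI; rule subsetI)
    fix e assume "e \<in> {{(u, v1), (u, v2)} |u v1 v2. u \<in> {0..<2*n+1} \<and> {v1, v2} \<in> {{i, (i + 1) mod (2*m+1)} |i. i < 2*m+1}}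
     \<union> {{(u1, v), (u2, v)} |u1 u2 v. {u1, u2} \<in> {{i, j} |i j. i < 2*n+1 \<and> j < 2*n+1 \<and> i \<noteq> j} \<and> v \<in> {0..<2*m+1}}"
    then show "e \<in> {{(a,j),(b,j)} | a b j. a < b \<and> b < 2*n+1 \<and> j < 2*m+1}
   \<union> {{(a,j),(a,Suc j mod (2*m+1))} | a j. a < 2*n+1 \<and> j < 2*m+1}"
    proof
      assume "e \<in> {{(u, v1), (u, v2)} |u v1 v2. u \<in> {0..<2*n+1} \<and> {v1, v2} \<in> {{i, (i + 1) mod (2*m+1)} |i. i < 2*m+1}}"
      then obtain u i where "u < 2*n+1" "i < 2*m+1" "e = {(u,i),(u,Suc i mod (2*m+1))}"
        by (auto simp: doubleton_eq_iff insert_commute)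
      then show ?thesis by blast
    next
      assume "e \<in> {{(u1, v), (u2, v)} |u1 u2 v. {u1, u2} \<in> {{i, j} |i j. i < 2*n+1 \<and> j < 2*n+1 \<and> i \<noteq> j} \<and> v \<in> {0..<2*m+1}}"
      then have "\<exists>u1 u2 v. e = {(u1, v), (u2, v)} \<and> (\<exists>i j. {u1,u2} = {i,j} \<and> i < 2*n+1 \<and> j < 2*n+1 \<and> i \<noteq> j) \<and> v < 2*m+1"
        by simp
      then obtain u1 u2 v i j where "e = {(u1, v), (u2, v)}" "{u1,u2} = {i,j}" "i < 2*n+1" "j < 2*n+1" "i \<noteq> j" "v < 2*m+1" by blast
      then have ab2: "u1 < 2*n+1" "u2 < 2*n+1" "u1 \<noteq> u2" "v < 2*m+1" "e = {(u1,v),(u2,v)}" by (auto simp: doubleton_eq_iff)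
      show ?thesis
      proof (cases "u1 < u2")
        case True
        then have "e \<in> {{(a,j),(b,j)} | a b j. a < b \<and> b < 2*n+1 \<and> j < 2*m+1}" using ab2 by blast
        then show ?thesis by (rule UnI1)
      next
        case False
        then have "u2 < u1" using ab2 by simp
        moreover have "e = {(u2,v),(u1,v)}" using ab2 by (simp add: insert_commute)
        ultimately have "e \<in> {{(a,j),(b,j)} | a b j. a < b \<and> b < 2*n+1 \<and> j < 2*m+1}" using ab2 by blast
        then show ?thesis by (rule UnI1)
      qed
    qed
  next
    fix e assume "e \<in> {{(a,j),(b,j)} | a b j. a < b \<and> b < 2*n+1 \<and> j < 2*m+1}
   \<union> {{(a,j),(a,Suc j mod (2*m+1))} | a j. a < 2*n+1 \<and> j < 2*m+1}"
    then show "e \<in> {{(u, v1), (u, v2)} |u v1 v2. u \<in> {0..<2*n+1} \<and> {v1, v2} \<in> {{i, (i + 1) mod (2*m+1)} |i. i < 2*m+1}}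
     \<union> {{(u1, v), (u2, v)} |u1 u2 v. {u1, u2} \<in> {{i, j} |i j. i < 2*n+1 \<and> j < 2*n+1 \<and> i \<noteq> j} \<and> v \<in> {0..<2*m+1}}"
    proof
      assume "e \<in> {{(a,j),(b,j)} | a b j. a < b \<and> b < 2*n+1 \<and> j < 2*m+1}"
      then obtain a b j where "a < b" "b < 2*n+1" "j < 2*m+1" "e = {(a,j),(b,j)}" by blast
      then show ?thesis
        apply (intro UnI2 CollectI)
        apply (rule exI[of _ a], rule exI[of _ b], rule exI[of _ j])
        apply auto
        apply (rule exI[of _ a], rule exI[of _ b])
        by auto
    next
      assume "e \<in> {{(a,j),(a,Suc j mod (2*m+1))} | a j. a < 2*n+1 \<and> j < 2*m+1}"
      then obtain a j where "a < 2*n+1" "j < 2*m+1" "e = {(a,j),(a,Suc j mod (2*m+1))}" by blast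
      then show ?thesis
        apply (intro UnI1 CollectI)
        apply (rule exI[of _ a], rule exI[of _ j], rule exI[of _ "Suc j mod (2*m+1)"])
        by auto
    qed
  qed
qed

lemma verts_G: "verts (complete_graph (2*n+1) \<box> cycle_graph (2*m+1)) = {0..<2*n+1} \<times> {0..<2*m+1}"
  unfolding cart_prod_def verts_def complete_graph_def cycle_graph_def by simp

definition off :: "nat \<Rightarrow> nat \<Rightarrow> nat \<Rightarrow> nat" where
  "off n j a = (if even j then a else 2*n - a)"
definition ps :: "nat \<Rightarrow> nat \<times> nat \<Rightarrow> nat" where
  "ps n v = snd v * (2*n+1) + off n (snd v) (fst v)"

lemma lex_lt1:
  fixes K q1 q2 r1 r2 :: nat
  assumes "r1 < K" "q1 < q2"
  shows "q1*K + r1 < q2*K + r2"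
proof -
  have "q1*K + r1 < q1*K + K" using assms by simp
  also have "\<dots> = Suc q1 * K" by simp
  also have "\<dots> \<le> q2 * K" using assms by (intro mult_le_mono1) simp
  finally show ?thesis by simp
qed

lemma lex_less:
  fixes K q1 q2 r1 r2 :: nat
  assumes "r1 < K" "r2 < K"
  shows "q1*K + r1 < q2*K + r2 \<longleftrightarrow> q1 < q2 \<or> (q1 = q2 \<and> r1 < r2)"
  using lex_lt1[OF assms(1), of q1 q2 r2] lex_lt1[OF assms(2), of q2 q1 r1]
  by (cases q1 q2 rule: linorder_cases) auto

lemma off_lt: "a < 2*n+1 \<Longrightarrow> off n j a < 2*n+1"
  unfolding off_def by auto

lemma ps_less:
  assumes "a < 2*n+1" "b < 2*n+1"
  shows "ps n (a,j) < ps n (b,j') \<longleftrightarrow> j < j' \<or> (j = j' \<and> off n j a < off n j b)"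
  unfolding ps_def using lex_less[OF off_lt[OF assms(1), of j] off_lt[OF assms(2), of j'], of j j'] by auto

lemma off_less: "a < 2*n+1 \<Longrightarrow> b < 2*n+1 \<Longrightarrow> off n j a < off n j b \<longleftrightarrow> (if even j then a < b else b < a)"
  unfolding off_def by auto

lemma ps_inj: "inj_on (ps n) ({0..<2*n+1} \<times> {0..<2*m+1})"
proof (rule inj_onI)
  fix x y assume x: "x \<in> {0..<2*n+1} \<times> {0..<2*m+1}" and y: "y \<in> {0..<2*n+1} \<times> {0..<2*m+1}" and e: "ps n x = ps n y"
  obtain a j where xa: "x = (a,j)" "a < 2*n+1" using x by auto
  obtain b j' where yb: "y = (b,j')" "b < 2*n+1" using y by auto
  have "\<not> ps n (a,j) < ps n (b,j')" "\<not> ps n (b,j') < ps n (a,j)" using e xa yb by auto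
  then show "x = y" unfolding ps_less[OF xa(2) yb(2)] ps_less[OF yb(2) xa(2)] off_less[OF xa(2) yb(2)] off_less[OF yb(2) xa(2)]
    using xa yb by (auto split: if_splits)
qed


definition Kpage :: "nat \<Rightarrow> nat \<Rightarrow> nat \<Rightarrow> nat \<Rightarrow> nat" where
  "Kpage n m j s = (if j = 0 \<or> j = 2*m then
      (if s mod (2*n+2) = 2*n then (if j = 0 then 2*n+2 else 2*n+1)
       else if s mod (2*n+2) = 2*n+1 then 2*n else s mod (2*n+2))
    else s mod (2*n+1))"
definition wpage :: "nat \<Rightarrow> nat \<Rightarrow> nat" where
  "wpage n a = (a + 2*n) mod (2*n+1)"
definition ppage :: "nat \<Rightarrow> nat \<Rightarrow> nat" where
  "ppage n j = (if even j then 2*n+1 else 2*n+2)"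
definition pg :: "nat \<Rightarrow> nat \<Rightarrow> (nat \<times> nat) set \<Rightarrow> nat" where
  "pg n m e = (let J = snd ` e in if card J = 1 then Kpage n m (Min J) (\<Sum>(fst ` e))
      else if Max J = Min J + 1 then ppage n (Min J) else wpage n (Min (fst ` e)))"

lemma pg_K: "a \<noteq> b \<Longrightarrow> pg n m {(a,j),(b,j)} = Kpage n m j (a+b)"
  unfolding pg_def by (simp add: Let_def)

lemma pg_P: "pg n m {(a,j),(a,Suc j)} = ppage n j"
  unfolding pg_def by (simp add: Let_def)

lemma pg_W: "m \<ge> 1 \<Longrightarrow> pg n m {(a,2*m),(a,0)} = wpage n a"
  unfolding pg_def by (simp add: Let_def)

lemma crossing_D:
  "crossing pos {p,q} {r,s} \<Longrightarrow>
    (pos p < pos r \<and> pos r < pos q \<and> pos q < pos s) \<or> (pos q < pos r \<and> pos r < pos p \<and> pos p < pos s) \<or>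
    (pos p < pos s \<and> pos s < pos q \<and> pos q < pos r) \<or> (pos q < pos s \<and> pos s < pos p \<and> pos p < pos r)"
  unfolding crossing_def by (auto simp: doubleton_eq_iff)

lemma sep_nocross: "(\<forall>u\<in>e. \<forall>x\<in>f. pos u < pos x) \<Longrightarrow> \<not> crossing pos e f \<and> \<not> crossing pos f e"
  unfolding crossing_def by (metis insertI1 insert_commute less_asym)

lemma inside_nocross: "pos u < pos v \<Longrightarrow> (\<forall>x\<in>f. pos u < pos x \<and> pos x < pos v) \<Longrightarrow>
    \<not> crossing pos {u,v} f \<and> \<not> crossing pos f {u,v}"
  unfolding crossing_def by (auto simp: doubleton_eq_iff)

lemma cross_self: "\<not> crossing pos e e"
  unfolding crossing_def by (auto simp: doubleton_eq_iff)

lemma no_interleave: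
  fixes a b c d M :: nat
  assumes "a < c" "c < b" "b < d" "d < M" "(a+b) mod M = (c+d) mod M"
  shows False
proof -
  have "M dvd (c+d) - (a+b)" using assms by (subst mod_eq_dvd_iff_nat[symmetric]) auto
  moreover have "0 < (c+d) - (a+b)" "(c+d) - (a+b) < M" using assms by auto
  ultimately show False using nat_dvd_not_less by blast
qed

lemma mod_cancel_lt:
  fixes x y z M :: nat
  assumes "(x + y) mod M = (x + z) mod M" "y < M" "z < M"
  shows "y = z"
proof (rule ccontr)
  assume "y \<noteq> z"
  then consider "y < z" | "z < y" by linarith
  then show False
  proof cases
    case 1
    then have "M dvd (x+z) - (x+y)" using assms by (subst mod_eq_dvd_iff_nat[symmetric]) auto
    moreover have "0 < (x+z) - (x+y)" "(x+z) - (x+y) < M" using assms 1 by auto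
    ultimately show False using nat_dvd_not_less by blast
  next
    case 2
    then have "M dvd (x+y) - (x+z)" using assms by (subst mod_eq_dvd_iff_nat[symmetric]) auto
    moreover have "0 < (x+y) - (x+z)" "(x+y) - (x+z) < M" using assms 2 by auto
    ultimately show False using nat_dvd_not_less by blast
  qed
qed

lemma Kpage_inj:
  assumes "Kpage n m j s1 = Kpage n m j s2"
  shows "s1 mod (if j = 0 \<or> j = 2*m then 2*n+2 else 2*n+1) = s2 mod (if j = 0 \<or> j = 2*m then 2*n+2 else 2*n+1)"
proof -
  show ?thesis using assms unfolding Kpage_def
    apply (auto split: if_splits)
    using mod_less_divisor[of "Suc (Suc (2*n))"] by (metis less_irrefl zero_less_Suc)+
qed

lemma same_block_cross:
  assumes "a < b" "b < 2*n+1" "c < d" "d < 2*n+1"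
    "crossing (ps n) {(a,j),(b,j)} {(c,j),(d,j)}"
  shows "(a < c \<and> c < b \<and> b < d) \<or> (c < a \<and> a < d \<and> d < b)"
  using crossing_D[OF assms(5)] assms(1-4) by (auto simp: ps_less off_less split: if_splits)


definition ok :: "nat \<Rightarrow> nat \<Rightarrow> (nat \<times> nat) set \<Rightarrow> (nat \<times> nat) set \<Rightarrow> bool" where
  "ok n m e f \<longleftrightarrow> (pg n m e = pg n m f \<longrightarrow> \<not> crossing (ps n) e f \<and> (e \<noteq> f \<longrightarrow> e \<inter> f = {}))"

lemma ok_KK:
  assumes "a < b" "b < 2*n+1" "c < d" "d < 2*n+1"
  shows "ok n m {(a,j),(b,j)} {(c,j'),(d,j')}"
  unfolding ok_def
proof (intro impI)
  assume "pg n m {(a,j),(b,j)} = pg n m {(c,j'),(d,j')}"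
  then have pe: "Kpage n m j (a+b) = Kpage n m j' (c+d)" using assms by (simp add: pg_K)
  show "\<not> crossing (ps n) {(a,j),(b,j)} {(c,j'),(d,j')} \<and> ({(a,j),(b,j)} \<noteq> {(c,j'),(d,j')} \<longrightarrow> {(a,j),(b,j)} \<inter> {(c,j'),(d,j')} = {})"
  proof (cases "j = j'")
    case False
    have "\<not> crossing (ps n) {(a,j),(b,j)} {(c,j'),(d,j')}"
    proof
      assume "crossing (ps n) {(a,j),(b,j)} {(c,j'),(d,j')}"
      from crossing_D[OF this] show False using assms False by (auto simp: ps_less)
    qed
    then show ?thesis using False by auto
  next
    case True
    define M where "M = (if j = 0 \<or> j = 2*m then 2*n+2 else 2*n+1)"
    have M: "2*n+1 \<le> M" unfolding M_def by auto
    have cls: "(a+b) mod M = (c+d) mod M" using Kpage_inj[OF pe[unfolded True[symmetric]]] unfolding M_def by simp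
    have nc: "\<not> crossing (ps n) {(a,j),(b,j)} {(c,j'),(d,j')}"
    proof
      assume "crossing (ps n) {(a,j),(b,j)} {(c,j'),(d,j')}"
      then have "(a < c \<and> c < b \<and> b < d) \<or> (c < a \<and> a < d \<and> d < b)"
        using same_block_cross[OF assms, of j] True by simp
      then show False
      proof
        assume "a < c \<and> c < b \<and> b < d"
        then show False using no_interleave[of a c b d M] cls M assms by auto
      next
        assume "c < a \<and> a < d \<and> d < b"
        then show False using no_interleave[of c a d b M] cls M assms by auto
      qed
    qed
    have "{(a,j),(b,j)} \<inter> {(c,j'),(d,j')} = {}" if ne: "{(a,j),(b,j)} \<noteq> {(c,j'),(d,j')}"
    proof (rule ccontr)
      assume "{(a,j),(b,j)} \<inter> {(c,j'),(d,j')} \<noteq> {}"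
      then have "a = c \<or> a = d \<or> b = c \<or> b = d" by auto
      moreover have "b < M" "d < M" "a < M" "c < M" using M assms by auto
      ultimately consider "a = c" | "a = d" | "b = c" | "b = d" by blast
      then show False
      proof cases
        case 1
        then have "(a+b) mod M = (a+d) mod M" using cls by simp
        then have "b = d" using mod_cancel_lt \<open>b < M\<close> \<open>d < M\<close> by blast
        then show False using 1 ne True by simp
      next
        case 2
        then have "(a+b) mod M = (a+c) mod M" using cls by (simp add: add.commute)
        then have "b = c" using mod_cancel_lt \<open>b < M\<close> \<open>c < M\<close> by blast
        then show False using 2 assms by simp
      next
        case 3
        then have "(b+a) mod M = (b+d) mod M" using cls by (simp add: add.commute)
        then have "a = d" using mod_cancel_lt \<open>a < M\<close> \<open>d < M\<close> by blast
        then show False using 3 assms by simp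
      next
        case 4
        then have "(b+a) mod M = (b+c) mod M" using cls by (simp add: add.commute)
        then have "a = c" using mod_cancel_lt \<open>a < M\<close> \<open>c < M\<close> by blast
        then show False using 4 ne True by simp
      qed
    qed
    then show ?thesis using nc by blast
  qed
qed

lemma Kpage_ppage:
  assumes "Kpage n m j s = ppage n j'" "m \<ge> 1"
  shows "(j = 0 \<and> odd j') \<or> (j = 2*m \<and> even j')"
proof -
  show ?thesis using assms unfolding Kpage_def ppage_def
    apply (auto split: if_splits)
    using mod_less_divisor[of "Suc (Suc (2*n))" s] mod_less_divisor[of "Suc (2*n)" s] by linarith+
qed

lemma ok_KP:
  assumes "a < b" "b < 2*n+1" "c < 2*n+1" "j < 2*m+1" "j' < 2*m" "m \<ge> 1"
  shows "ok n m {(a,j),(b,j)} {(c,j'),(c,Suc j')} \<and> ok n m {(c,j'),(c,Suc j')} {(a,j),(b,j)}"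
proof -
  have "\<not> crossing (ps n) {(a,j),(b,j)} {(c,j'),(c,Suc j')} \<and> \<not> crossing (ps n) {(c,j'),(c,Suc j')} {(a,j),(b,j)}
     \<and> {(a,j),(b,j)} \<inter> {(c,j'),(c,Suc j')} = {}"
    if pe: "pg n m {(a,j),(b,j)} = pg n m {(c,j'),(c,Suc j')}"
  proof -
    have "Kpage n m j (a+b) = ppage n j'" using pe assms by (simp add: pg_K pg_P)
    from Kpage_ppage[OF this assms(6)] consider "j = 0" "odd j'" | "j = 2*m" "even j'" by blast
    then show ?thesis
    proof cases
      case 1
      then have "j' \<ge> 1" by (cases j') auto
      then have "\<forall>u\<in>{(a,j),(b,j)}. \<forall>x\<in>{(c,j'),(c,Suc j')}. ps n u < ps n x"
        using 1 assms by (auto simp: ps_less)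
      from sep_nocross[OF this] show ?thesis using 1 \<open>j' \<ge> 1\<close> by auto
    next
      case 2
      then have "Suc j' < 2*m" using assms by (metis Suc_lessI dvd_triv_left even_Suc)
      then have "\<forall>u\<in>{(c,j'),(c,Suc j')}. \<forall>x\<in>{(a,j),(b,j)}. ps n u < ps n x"
        using 2 assms by (auto simp: ps_less)
      from sep_nocross[OF this] show ?thesis using 2 \<open>Suc j' < 2*m\<close> by auto
    qed
  qed
  then show ?thesis unfolding ok_def by auto
qed

lemma Kpage_wpage:
  assumes "j = 0 \<or> j = 2*m" "c < 2*n+1" "Kpage n m j s = wpage n c"
  shows "s mod (2*n+2) = (c + (2*n+1)) mod (2*n+2)"
proof (cases "c = 0")
  case True
  then have "wpage n c = 2*n" unfolding wpage_def by simp
  then show ?thesis using assms True unfolding Kpage_def by (auto split: if_splits)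
next
  case False
  have e1: "c + 2*n = (c - 1) + (2*n+1)" using False by simp
  have w: "wpage n c = c - 1" unfolding wpage_def e1 using assms(2) by (subst mod_add_self2) simp
  have e2: "c + (2*n+1) = (c - 1) + (2*n+2)" using False by simp
  have c2: "(c + (2*n+1)) mod (2*n+2) = c - 1" unfolding e2 using assms(2) by (subst mod_add_self2) simp
  show ?thesis using assms w c2 unfolding Kpage_def by (auto split: if_splits)
qed


lemma ok_KW:
  assumes "a < b" "b < 2*n+1" "c < 2*n+1" "j < 2*m+1" "m \<ge> 1"
  shows "ok n m {(a,j),(b,j)} {(c,2*m),(c,0)} \<and> ok n m {(c,2*m),(c,0)} {(a,j),(b,j)}"
proof -
  have "\<not> crossing (ps n) {(a,j),(b,j)} {(c,2*m),(c,0)} \<and> \<not> crossing (ps n) {(c,2*m),(c,0)} {(a,j),(b,j)}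
     \<and> {(a,j),(b,j)} \<inter> {(c,2*m),(c,0)} = {}"
    if pe: "pg n m {(a,j),(b,j)} = pg n m {(c,2*m),(c,0)}"
  proof -
    have pe2: "Kpage n m j (a+b) = wpage n c" using pe assms by (simp add: pg_K pg_W)
    show ?thesis
    proof (cases "j = 0 \<or> j = 2*m")
      case False
      then have "0 < j" "j < 2*m" using assms by auto
      have lt: "ps n (c,0) < ps n (c,2*m)" using assms by (simp add: ps_less)
      have "\<forall>x\<in>{(a,j),(b,j)}. ps n (c,0) < ps n x \<and> ps n x < ps n (c,2*m)"
        using assms \<open>0 < j\<close> \<open>j < 2*m\<close> by (auto simp: ps_less)
      from inside_nocross[OF lt this] have "\<not> crossing (ps n) {(c,0),(c,2*m)} {(a,j),(b,j)} \<and> \<not> crossing (ps n) {(a,j),(b,j)} {(c,0),(c,2*m)}" .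
      then show ?thesis using \<open>0 < j\<close> \<open>j < 2*m\<close> by (auto simp: insert_commute)
    next
      case True
      have cls: "(a+b) mod (2*n+2) = (c + (2*n+1)) mod (2*n+2)" using Kpage_wpage[OF True assms(3) pe2] .
      have ca: "c \<noteq> a"
      proof
        assume "c = a"
        then have "(a+b) mod (2*n+2) = (a + (2*n+1)) mod (2*n+2)" using cls by simp
        then have "b = 2*n+1" by (rule mod_cancel_lt) (use assms in auto)
        then show False using assms by simp
      qed
      have cb: "c \<noteq> b"
      proof
        assume "c = b"
        then have "(b+a) mod (2*n+2) = (b + (2*n+1)) mod (2*n+2)" using cls by (simp add: add.commute)
        then have "a = 2*n+1" by (rule mod_cancel_lt) (use assms in auto)
        then show False using assms by simp
      qed
      have cr: "a < c \<and> c < b" if "crossing (ps n) {(a,j),(b,j)} {(c,2*m),(c,0)} \<or> crossing (ps n) {(c,2*m),(c,0)} {(a,j),(b,j)}"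
        using that
      proof
        assume h: "crossing (ps n) {(a,j),(b,j)} {(c,2*m),(c,0)}"
        from True show ?thesis
        proof
          assume "j = 0"
          with crossing_D[OF h] show ?thesis using assms by (simp add: ps_less off_less; linarith?)
        next
          assume "j = 2*m"
          with crossing_D[OF h] show ?thesis using assms by (simp add: ps_less off_less; linarith?)
        qed
      next
        assume h: "crossing (ps n) {(c,2*m),(c,0)} {(a,j),(b,j)}"
        from True show ?thesis
        proof
          assume "j = 0"
          with crossing_D[OF h] show ?thesis using assms by (simp add: ps_less off_less; linarith?)
        next
          assume "j = 2*m"
          with crossing_D[OF h] show ?thesis using assms by (simp add: ps_less off_less; linarith?)
        qed
      qed
      have "\<not> (a < c \<and> c < b)"
      proof
        assume "a < c \<and> c < b"
        then show False using no_interleave[of a c b "2*n+1" "2*n+2"] cls assms by auto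
      qed
      then show ?thesis using cr ca cb True assms by auto
    qed
  qed
  then show ?thesis unfolding ok_def by auto
qed

lemma ok_PP:
  assumes "a < 2*n+1" "c < 2*n+1"
  shows "ok n m {(a,j),(a,Suc j)} {(c,j'),(c,Suc j')}"
  unfolding ok_def
proof (intro impI)
  assume "pg n m {(a,j),(a,Suc j)} = pg n m {(c,j'),(c,Suc j')}"
  then have "ppage n j = ppage n j'" by (simp add: pg_P)
  then have par: "even j \<longleftrightarrow> even j'" unfolding ppage_def by (auto split: if_splits)
  show "\<not> crossing (ps n) {(a,j),(a,Suc j)} {(c,j'),(c,Suc j')} \<and> ({(a,j),(a,Suc j)} \<noteq> {(c,j'),(c,Suc j')} \<longrightarrow> {(a,j),(a,Suc j)} \<inter> {(c,j'),(c,Suc j')} = {})"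
  proof (cases "j = j'")
    case True
    show ?thesis
    proof (cases "a = c")
      case True
      then show ?thesis using \<open>j = j'\<close> cross_self by simp
    next
      case False
      have "\<not> crossing (ps n) {(a,j),(a,Suc j)} {(c,j'),(c,Suc j')}"
      proof
        assume "crossing (ps n) {(a,j),(a,Suc j)} {(c,j'),(c,Suc j')}"
        from crossing_D[OF this] show False using assms \<open>j = j'\<close> False by (auto simp: ps_less off_less split: if_splits)
      qed
      then show ?thesis using False by auto
    qed
  next
    case False
    then have "Suc j < j' \<or> Suc j' < j" using par by (metis Suc_lessI even_Suc linorder_neqE_nat)
    then show ?thesis
    proof
      assume h: "Suc j < j'"
      have "\<forall>u\<in>{(a,j),(a,Suc j)}. \<forall>x\<in>{(c,j'),(c,Suc j')}. ps n u < ps n x" using h assms by (auto simp: ps_less)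
      from sep_nocross[OF this] show ?thesis using h by auto
    next
      assume h: "Suc j' < j"
      have "\<forall>u\<in>{(c,j'),(c,Suc j')}. \<forall>x\<in>{(a,j),(a,Suc j)}. ps n u < ps n x" using h assms by (auto simp: ps_less)
      from sep_nocross[OF this] show ?thesis using h by auto
    qed
  qed
qed

lemma ok_PW:
  assumes "m \<ge> 1"
  shows "ok n m {(a,j),(a,Suc j)} {(c,2*m),(c,0)} \<and> ok n m {(c,2*m),(c,0)} {(a,j),(a,Suc j)}"
proof -
  have "wpage n c < 2*n+1" unfolding wpage_def by simp
  then have "pg n m {(a,j),(a,Suc j)} \<noteq> pg n m {(c,2*m),(c,0)}"
    using assms by (simp add: pg_P pg_W ppage_def)
  then show ?thesis unfolding ok_def by auto
qed

lemma ok_WW: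
  assumes "m \<ge> 1" "a < 2*n+1" "c < 2*n+1"
  shows "ok n m {(a,2*m),(a,0)} {(c,2*m),(c,0)}"
proof -
  have "a = c" if "pg n m {(a,2*m),(a,0)} = pg n m {(c,2*m),(c,0)}"
  proof -
    have "(2*n + a) mod (2*n+1) = (2*n + c) mod (2*n+1)" using that assms by (simp add: pg_W wpage_def add.commute)
    then show ?thesis using mod_cancel_lt assms by blast
  qed
  then show ?thesis unfolding ok_def using cross_self by auto
qed

lemma edge_cases:
  assumes "m \<ge> 1" "e \<in> edges (complete_graph (2*n+1) \<box> cycle_graph (2*m+1))"
  obtains (K) a b j where "a < b" "b < 2*n+1" "j < 2*m+1" "e = {(a,j),(b,j)}"
    | (P) a j where "a < 2*n+1" "j < 2*m" "e = {(a,j),(a,Suc j)}"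
    | (W) a where "a < 2*n+1" "e = {(a,2*m),(a,0)}"
proof -
  from assms(2)[unfolded edges_G] show thesis
  proof
    assume "e \<in> {{(a,j),(b,j)} | a b j. a < b \<and> b < 2*n+1 \<and> j < 2*m+1}"
    then show thesis using K by blast
  next
    assume "e \<in> {{(a,j),(a,Suc j mod (2*m+1))} | a j. a < 2*n+1 \<and> j < 2*m+1}"
    then obtain a j where h: "a < 2*n+1" "j < 2*m+1" "e = {(a,j),(a,Suc j mod (2*m+1))}" by blast
    show thesis
    proof (cases "j < 2*m")
      case True
      then have "Suc j mod (2*m+1) = Suc j" by simp
      then show thesis using P[of a j] h True by simp
    next
      case False
      then have "j = 2*m" using h by simp
      then have "Suc j mod (2*m+1) = 0" by simp
      then show thesis using W[of a] h \<open>j = 2*m\<close> by simp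
    qed
  qed
qed

lemma Kpage_lt: "Kpage n m j s < 2*n+3"
proof -
  show ?thesis unfolding Kpage_def
    apply (auto split: if_splits)
    using mod_less_divisor[of "Suc (Suc (2*n))" s] mod_less_divisor[of "Suc (2*n)" s] by linarith+
qed

lemma embed:
  assumes "m \<ge> 1"
  shows "matching_book_embedding (complete_graph (2*n+1) \<box> cycle_graph (2*m+1)) (2*n+3) (ps n) (pg n m)"
proof -
  let ?E = "edges (complete_graph (2*n+1) \<box> cycle_graph (2*m+1))"
  have pg_lt: "pg n m e < 2*n+3" if "e \<in> ?E" for e
    using assms that
  proof (cases rule: edge_cases)
    case (K a b j)
    then show ?thesis using Kpage_lt by (simp add: pg_K)
  next
    case (P a j)
    then show ?thesis by (simp add: pg_P ppage_def)
  next
    case (W a)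
    have "wpage n a < 2*n+1" unfolding wpage_def by simp
    then show ?thesis using W assms by (simp add: pg_W)
  qed
  have allok: "ok n m e f" if "e \<in> ?E" "f \<in> ?E" for e f
    using assms that(1)
  proof (cases rule: edge_cases)
    case (K a b j)
    show ?thesis using assms that(2)
    proof (cases rule: edge_cases)
      case (K c d j')
      then show ?thesis using \<open>a < b\<close> \<open>b < 2*n+1\<close> \<open>e = {(a,j),(b,j)}\<close> ok_KK by simp
    next
      case (P c j')
      then show ?thesis using K ok_KP assms by simp
    next
      case (W c)
      then show ?thesis using K ok_KW assms by simp
    qed
  next
    case (P a j)
    show ?thesis using assms that(2)
    proof (cases rule: edge_cases)
      case (K c d j')
      then show ?thesis using P ok_KP assms by simp
    next
      case (P c j')
      then show ?thesis using \<open>a < 2*n+1\<close> \<open>e = {(a,j),(a,Suc j)}\<close> ok_PP by simp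
    next
      case (W c)
      then show ?thesis using P ok_PW assms by simp
    qed
  next
    case (W a)
    show ?thesis using assms that(2)
    proof (cases rule: edge_cases)
      case (K c d j')
      then show ?thesis using W ok_KW assms by simp
    next
      case (P c j')
      then show ?thesis using W ok_PW assms by simp
    next
      case (W c)
      then show ?thesis using \<open>a < 2*n+1\<close> \<open>e = {(a,2*m),(a,0)}\<close> ok_WW assms by simp
    qed
  qed
  show ?thesis unfolding matching_book_embedding_def
    using ps_inj[of n m] verts_G[of n m] pg_lt allok unfolding ok_def by auto
qed

abbreviation GG :: "nat \<Rightarrow> nat \<Rightarrow> (nat \<times> nat) graph" where
  "GG n m \<equiv> complete_graph (2*n+1) \<box> cycle_graph (2*m+1)"

lemma edge_sub:
  assumes "m \<ge> 1" "e \<in> edges (GG n m)"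
  shows "e \<subseteq> verts (GG n m) \<and> card e = 2"
  using assms
proof (cases rule: edge_cases)
  case (K a b j) then show ?thesis by (auto simp: verts_G[unfolded Suc_eq_plus1[symmetric]])
next
  case (P a j) then show ?thesis by (auto simp: verts_G[unfolded Suc_eq_plus1[symmetric]])
next
  case (W a) then show ?thesis using assms by (auto simp: verts_G[unfolded Suc_eq_plus1[symmetric]])
qed

lemma finite_V: "finite (verts (GG n m))" unfolding verts_G by simp
lemma card_V: "card (verts (GG n m)) = (2*n+1)*(2*m+1)" unfolding verts_G by simp

lemma finite_E:
  assumes "m \<ge> 1" shows "finite (edges (GG n m))"
proof -
  have "edges (GG n m) \<subseteq> Pow (verts (GG n m))" using edge_sub[OF assms] by auto
  then show ?thesis using finite_V by (meson finite_Pow_iff finite_subset)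
qed

lemma mod_back:
  fixes v m :: nat
  assumes "v < 2*m+1"
  shows "Suc ((v + 2*m) mod (2*m+1)) mod (2*m+1) = v"
proof -
  have "Suc ((v + 2*m) mod (2*m+1)) mod (2*m+1) = Suc (v + 2*m) mod (2*m+1)" by (simp add: mod_Suc_eq)
  also have "\<dots> = v mod (2*m+1)" using mod_add_self2[of v "2*m+1"] by simp
  finally show ?thesis using assms by simp
qed

lemma degree_G:
  assumes "m \<ge> 1" "u < 2*n+1" "v < 2*m+1"
  shows "degree (GG n m) (u,v) = 2*n+2"
proof -
  let ?E = "edges (GG n m)"
  let ?C = "2*m+1"
  define S1 where "S1 = (\<lambda>b. {(u,v),(b,v)}) ` ({0..<2*n+1} - {u})"
  define S2 where "S2 = {{(u,v),(u,Suc v mod ?C)}, {(u,v),(u,(v+2*m) mod ?C)}}"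
  have sub1: "{e \<in> ?E. (u,v) \<in> e} \<subseteq> S1 \<union> S2"
  proof
    fix e assume "e \<in> {e \<in> ?E. (u,v) \<in> e}"
    then have eE: "e \<in> ?E" and uv: "(u,v) \<in> e" by auto
    from assms(1) eE show "e \<in> S1 \<union> S2"
    proof (cases rule: edge_cases)
      case (K a b j)
      then have "j = v" "u = a \<or> u = b" using uv by auto
      then show ?thesis using K unfolding S1_def by (auto simp: insert_commute)
    next
      case (P a j)
      then have au: "a = u" and vj: "v = j \<or> v = Suc j" using uv by auto
      from vj show ?thesis
      proof
        assume "v = j"
        then have "Suc v mod ?C = Suc j" using P by simp
        then show ?thesis using P au \<open>v = j\<close> unfolding S2_def by auto
      next
        assume "v = Suc j"
        then have "(v + 2*m) mod ?C = j" using P by (simp add: mod_if)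
        then show ?thesis using P au \<open>v = Suc j\<close> unfolding S2_def by (auto simp: insert_commute)
      qed
    next
      case (W a)
      then have au: "a = u" and vj: "v = 2*m \<or> v = 0" using uv by auto
      from vj show ?thesis
      proof
        assume "v = 2*m"
        then have "Suc v mod ?C = 0" by simp
        then show ?thesis using W au \<open>v = 2*m\<close> unfolding S2_def by auto
      next
        assume "v = 0"
        then have "(v + 2*m) mod ?C = 2*m" by simp
        then show ?thesis using W au \<open>v = 0\<close> unfolding S2_def by (auto simp: insert_commute)
      qed
    qed
  qed
  have sub2: "S1 \<union> S2 \<subseteq> {e \<in> ?E. (u,v) \<in> e}"
  proof
    fix e assume "e \<in> S1 \<union> S2"
    then show "e \<in> {e \<in> ?E. (u,v) \<in> e}"
    proof
      assume "e \<in> S1"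
      then obtain b where b0: "b \<in> {0..<2*n+1} - {u}" "e = {(u,v),(b,v)}" unfolding S1_def by (rule imageE)
      then have b: "b < 2*n+1" "b \<noteq> u" "e = {(u,v),(b,v)}" by auto
      have "e \<in> {{(a,j),(b,j)} | a b j. a < b \<and> b < 2*n+1 \<and> j < 2*m+1}"
      proof (cases "u < b")
        case True then show ?thesis using b assms by blast
      next
        case False
        then have "b < u" "e = {(b,v),(u,v)}" using b by (auto simp: insert_commute)
        then show ?thesis using b assms by blast
      qed
      then show ?thesis using b(3) unfolding edges_G by auto
    next
      assume "e \<in> S2"
      then consider "e = {(u,v),(u,Suc v mod ?C)}" | "e = {(u,v),(u,(v+2*m) mod ?C)}" unfolding S2_def by auto
      then show ?thesis
      proof cases
        case 1
        have "e \<in> {{(a,j),(a,Suc j mod (2*m+1))} | a j. a < 2*n+1 \<and> j < 2*m+1}" using 1 assms by blast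
        then show ?thesis using 1 unfolding edges_G by auto
      next
        case 2
        have "e = {(u,(v+2*m) mod ?C),(u,Suc ((v+2*m) mod ?C) mod ?C)}"
          using 2 mod_back[OF assms(3)] by (auto simp: insert_commute)
        moreover have "(v+2*m) mod ?C < ?C" by simp
        ultimately have "e \<in> {{(a,j),(a,Suc j mod (2*m+1))} | a j. a < 2*n+1 \<and> j < 2*m+1}" using assms by blast
        then show ?thesis using 2 unfolding edges_G by auto
      qed
    qed
  qed
  have I: "{e \<in> ?E. (u,v) \<in> e} = S1 \<union> S2" using sub1 sub2 by blast
  have c1: "card S1 = 2*n"
  proof -
    have "inj_on (\<lambda>b. {(u,v),(b,v)}) ({0..<2*n+1} - {u})"
      by (rule inj_onI) (auto simp: doubleton_eq_iff)
    then have "card S1 = card ({0..<2*n+1} - {u})" unfolding S1_def by (rule card_image)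
    also have "\<dots> = 2*n" using assms by simp
    finally show ?thesis .
  qed
  have ne: "Suc v mod ?C \<noteq> (v+2*m) mod ?C"
  proof
    assume h: "Suc v mod ?C = (v+2*m) mod ?C"
    have "(Suc v + 0) mod ?C = (Suc v + (2*m - 1)) mod ?C" using h assms(1) by simp
    then have "0 = 2*m - 1" by (rule mod_cancel_lt) auto
    then show False using assms(1) by simp
  qed
  have c2: "card S2 = 2" unfolding S2_def using ne by (simp add: doubleton_eq_iff)
  have dis: "S1 \<inter> S2 = {}" unfolding S1_def S2_def by (auto simp: doubleton_eq_iff)
  have "degree (GG n m) (u,v) = card (S1 \<union> S2)" unfolding degree_def I ..
  also have "\<dots> = card S1 + card S2" by (rule card_Un_disjoint) (auto simp: S1_def S2_def dis)
  finally show ?thesis using c1 c2 by simp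
qed

lemma max_degree_G:
  assumes "m \<ge> 1"
  shows "max_degree (GG n m) = 2*n+2"
proof -
  have "degree (GG n m) ` verts (GG n m) = {2*n+2}"
  proof
    show "degree (GG n m) ` verts (GG n m) \<subseteq> {2*n+2}"
      using degree_G[OF assms] unfolding verts_G by auto
    have "(0,0) \<in> verts (GG n m)" unfolding verts_G by simp
    then show "{2*n+2} \<subseteq> degree (GG n m) ` verts (GG n m)"
      using degree_G[OF assms, of 0 n 0] by (metis empty_subsetI image_eqI insert_subset less_Suc_eq_0_disj zero_less_Suc add_gr_0 zero_less_one)
  qed
  then show ?thesis unfolding max_degree_def by simp
qed

lemma card_E:
  assumes "m \<ge> 1"
  shows "2 * card (edges (GG n m)) = (2*n+1)*(2*m+1)*(2*n+2)"
proof -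
  let ?E = "edges (GG n m)" and ?V = "verts (GG n m)"
  have fE: "finite ?E" using finite_E[OF assms] .
  have fV: "finite ?V" using finite_V .
  have "(\<Sum>x\<in>?V. degree (GG n m) x) = (\<Sum>x\<in>?V. \<Sum>e\<in>?E. if x \<in> e then 1 else 0)"
  proof (rule sum.cong)
    fix x assume "x \<in> ?V"
    have "degree (GG n m) x = (\<Sum>e\<in>{e \<in> ?E. x \<in> e}. 1)" unfolding degree_def by simp
    also have "\<dots> = (\<Sum>e\<in>?E. if x \<in> e then 1 else 0)" using fE by (rule sum.inter_filter)
    finally show "degree (GG n m) x = (\<Sum>e\<in>?E. if x \<in> e then 1 else 0)" .
  qed simp
  also have "\<dots> = (\<Sum>e\<in>?E. \<Sum>x\<in>?V. if x \<in> e then 1 else 0)" by (rule sum.swap)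
  also have "\<dots> = (\<Sum>e\<in>?E. 2)"
  proof (rule sum.cong)
    fix e assume eE: "e \<in> ?E"
    have "(\<Sum>x\<in>?V. if x \<in> e then 1 else 0) = (\<Sum>x\<in>{x \<in> ?V. x \<in> e}. 1::nat)"
      using fV by (rule sum.inter_filter[symmetric])
    also have "{x \<in> ?V. x \<in> e} = e" using edge_sub[OF assms eE] by auto
    finally show "(\<Sum>x\<in>?V. if x \<in> e then 1 else 0) = (2::nat)" using edge_sub[OF assms eE] by simp
  qed simp
  also have "\<dots> = 2 * card ?E" by simp
  finally have hs: "(\<Sum>x\<in>?V. degree (GG n m) x) = 2 * card ?E" .
  have "(\<Sum>x\<in>?V. degree (GG n m) x) = (\<Sum>x\<in>?V. 2*n+2)"
  proof (rule sum.cong)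
    fix x assume "x \<in> ?V"
    then obtain a b where "x = (a,b)" "a < 2*n+1" "b < 2*m+1" unfolding verts_G by auto
    then show "degree (GG n m) x = 2*n+2" using degree_G[OF assms] by simp
  qed simp
  also have "\<dots> = (2*n+1)*(2*m+1)*(2*n+2)" using card_V[of n m] by simp
  finally show ?thesis using hs by simp
qed

lemma lower:
  assumes "m \<ge> 1" "matching_book_embedding (GG n m) k pos page"
  shows "2*n+3 \<le> k"
proof (rule ccontr)
  assume "\<not> 2*n+3 \<le> k"
  then have k: "k \<le> 2*n+2" by simp
  let ?E = "edges (GG n m)" and ?V = "verts (GG n m)"
  define h where "h = 2*n*m + n + m"
  have N: "(2*n+1)*(2*m+1) = 2*h+1" unfolding h_def by (simp add: algebra_simps)
  have emb: "\<forall>e\<in>?E. page e < k" "\<forall>e\<in>?E. \<forall>f\<in>?E. page e = page f \<longrightarrow> e \<noteq> f \<longrightarrow> e \<inter> f = {}"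
    using assms(2) unfolding matching_book_embedding_def by auto
  have fE: "finite ?E" using finite_E[OF assms(1)] .
  have Ep: "card {e \<in> ?E. page e = p} \<le> h" for p
  proof -
    let ?Ep = "{e \<in> ?E. page e = p}"
    have pw: "pairwise disjnt ?Ep" unfolding pairwise_def disjnt_def using emb(2) by blast
    have fin: "finite A" if "A \<in> ?Ep" for A
    proof -
      have "A \<subseteq> ?V" using that edge_sub[OF assms(1)] by blast
      then show ?thesis using finite_V by (rule finite_subset)
    qed
    have "card (\<Union>?Ep) = sum card ?Ep" by (rule card_Union_disjoint[OF pw fin])
    also have "\<dots> = sum (\<lambda>_. 2) ?Ep"
    proof (rule sum.cong)
      fix e assume "e \<in> ?Ep"
      then show "card e = 2" using edge_sub[OF assms(1)] by blast
    qed simp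
    also have "\<dots> = 2 * card ?Ep" by simp
    finally have 1: "card (\<Union>?Ep) = 2 * card ?Ep" .
    have "\<Union>?Ep \<subseteq> ?V" using edge_sub[OF assms(1)] by blast
    then have "card (\<Union>?Ep) \<le> card ?V" using finite_V by (rule card_mono[rotated])
    then have "2 * card ?Ep \<le> 2*h+1" using 1 card_V[of n m] N by simp
    then show ?thesis by simp
  qed
  have "?E = (\<Union>p\<in>{..<k}. {e \<in> ?E. page e = p})" using emb(1) by blast
  then have "card ?E \<le> (\<Sum>p\<in>{..<k}. card {e \<in> ?E. page e = p})"
    using card_UN_le[of "{..<k}" "\<lambda>p. {e \<in> ?E. page e = p}"] by simp
  also have "\<dots> \<le> (\<Sum>p\<in>{..<k}. h)" by (rule sum_mono) (rule Ep)
  also have "\<dots> = k * h" by simp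
  also have "\<dots> \<le> (2*n+2) * h" using k by (rule mult_le_mono1)
  finally have "card ?E \<le> (2*n+2) * h" .
  moreover have "2 * card ?E = (2*h+1)*(2*n+2)" using card_E[OF assms(1), of n] unfolding N .
  ultimately show False by (simp add: algebra_simps)
qed

theorem lemma2p3:
  fixes n m :: nat
  assumes "n \<ge> 2" and "m \<ge> 1"
  shows "mbt (complete_graph (2*n+1) \<box> cycle_graph (2*m+1))
           = max_degree (complete_graph (2*n+1) \<box> cycle_graph (2*m+1)) + 1
       \<and> max_degree (complete_graph (2*n+1) \<box> cycle_graph (2*m+1)) + 1 = 2*n+3"
proof -
  have "mbt (GG n m) = 2*n+3"
    unfolding mbt_def
  proof (rule Least_equality)
    show "\<exists>pos page. matching_book_embedding (GG n m) (2*n+3) pos page" using embed[OF assms(2)] by blast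
  next
    fix k assume "\<exists>pos page. matching_book_embedding (GG n m) k pos page"
    then show "2*n+3 \<le> k" using lower[OF assms(2)] by blast
  qed
  then show ?thesis using max_degree_G[OF assms(2)] by simp
qed

end
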